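(* Let $c>1$ and $p=c/n$. In $G_{n,p}$, any local routing algorithm between two vertices has expected routing complexity $\Omega(n^2)$.
   Context: $G_{n,p}$ is the random graph on $n$ vertices in which each pair of vertices is joined by an open edge independently with probability $p$ (the complete graph with each edge failing with probability $1-p$). A routing algorithm between vertices $u,v$ may probe whether edges are open and outputs an open path from $u$ to $v$ if one exists; it is local if the first edge it probes is adjacent to $u$ and subsequently it probes only edges having an endpoint to which it has already established an open path from $u$. The routing complexity is the number of probes made until a path is found, conditioned on the event that $u$ and $v$ are connected by an open path. *)

theory Defs
  imports "HOL-Probability.Probability"
begin

definition edges :: "nat \<Rightarrow> nat set set" where
  "edges n = {e. e \<subseteq> {..<n} \<and> card e = 2}"

text \<open>A configuration assigns to every edge whether it is open (False off the edge set).
  G(n,p): edges open independently with probability p.\<close>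
definition gnp :: "nat \<Rightarrow> real \<Rightarrow> (nat set \<Rightarrow> bool) pmf" where
  "gnp n p = Pi_pmf (edges n) False (\<lambda>_. bernoulli_pmf p)"

definition open_edges :: "nat \<Rightarrow> (nat set \<Rightarrow> bool) \<Rightarrow> nat set set" where
  "open_edges n \<omega> = {e \<in> edges n. \<omega> e}"

definition conn :: "nat set set \<Rightarrow> nat \<Rightarrow> nat \<Rightarrow> bool" where
  "conn F x y \<longleftrightarrow> (x, y) \<in> {(a, b). {a, b} \<in> F}\<^sup>*"

text \<open>A (deterministic, adaptive) probing strategy chooses the next edge to probe from the
  history of probes so far (probed edges together with their status).\<close>
primrec probes :: "((nat set \<times> bool) list \<Rightarrow> nat set) \<Rightarrow> (nat set \<Rightarrow> bool) \<Rightarrow> nat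
    \<Rightarrow> (nat set \<times> bool) list" where
  "probes alg \<omega> 0 = []"
| "probes alg \<omega> (Suc k) = probes alg \<omega> k @ [(alg (probes alg \<omega> k), \<omega> (alg (probes alg \<omega> k)))]"

definition found_open :: "(nat set \<times> bool) list \<Rightarrow> nat set set" where
  "found_open h = {e. (e, True) \<in> set h}"

text \<open>Local routing algorithm from u to v in G(n,p): every probed edge is an edge of K_n
  having an endpoint to which an open path from u has already been established (so the
  first probe is adjacent to u), and whenever u and v are joined by an open path the
  algorithm eventually establishes an open path from u to v.\<close>
definition local_router ::
    "nat \<Rightarrow> nat \<Rightarrow> nat \<Rightarrow> ((nat set \<times> bool) list \<Rightarrow> nat set) \<Rightarrow> bool" where
  "local_router n u v alg \<longleftrightarrow>
     (\<forall>\<omega> k. alg (probes alg \<omega> k) \<in> edges n \<and>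
             (\<exists>x \<in> alg (probes alg \<omega> k). conn (found_open (probes alg \<omega> k)) u x)) \<and>
     (\<forall>\<omega>. conn (open_edges n \<omega>) u v \<longrightarrow> (\<exists>k. conn (found_open (probes alg \<omega> k)) u v))"

definition route_time ::
    "((nat set \<times> bool) list \<Rightarrow> nat set) \<Rightarrow> nat \<Rightarrow> nat \<Rightarrow> (nat set \<Rightarrow> bool) \<Rightarrow> nat" where
  "route_time alg u v \<omega> = (LEAST k. conn (found_open (probes alg \<omega> k)) u v)"

definition exp_routing_complexity ::
    "nat \<Rightarrow> real \<Rightarrow> nat \<Rightarrow> nat \<Rightarrow> ((nat set \<times> bool) list \<Rightarrow> nat set) \<Rightarrow> real" where
  "exp_routing_complexity n p u v alg =
     measure_pmf.expectation (gnp n p)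
       (\<lambda>\<omega>. real (route_time alg u v \<omega>) * indicator {\<omega>. conn (open_edges n \<omega>) u v} \<omega>)
     / measure_pmf.prob (gnp n p) {\<omega>. conn (open_edges n \<omega>) u v}"

end

theory Submission
  imports Defs
begin


definition Om :: "nat set set \<Rightarrow> (nat set \<Rightarrow> bool) set" where
  "Om E = {\<omega>. \<forall>x. x \<notin> E \<longrightarrow> \<not> \<omega> x}"

definition wt :: "real \<Rightarrow> nat set set \<Rightarrow> (nat set \<Rightarrow> bool) \<Rightarrow> real" where
  "wt p E \<omega> = (\<Prod>x\<in>E. if \<omega> x then p else 1 - p)"

lemma finite_Om: assumes "finite E" shows "finite (Om E)"
proof -
  have "Om E \<subseteq> (\<lambda>S x. x \<in> S) ` Pow E"
  proof
    fix \<omega> assume "\<omega> \<in> Om E"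
    then have "\<omega> = (\<lambda>x. x \<in> {y\<in>E. \<omega> y})" by (auto simp: Om_def)
    then show "\<omega> \<in> (\<lambda>S x. x \<in> S) ` Pow E" by blast
  qed
  then show ?thesis using assms by (meson finite_Pow_iff finite_imageI finite_subset)
qed

lemma wt_nonneg: "0 \<le> p \<Longrightarrow> p \<le> 1 \<Longrightarrow> 0 \<le> wt p E \<omega>"
  unfolding wt_def by (intro prod_nonneg) auto

lemma expect_sum:
  assumes "finite E" "0 \<le> p" "p \<le> 1"
  shows "measure_pmf.expectation (Pi_pmf E False (\<lambda>_. bernoulli_pmf p)) f
         = (\<Sum>\<omega>\<in>Om E. wt p E \<omega> * f \<omega>)"
proof -
  have "measure_pmf.expectation (Pi_pmf E False (\<lambda>_. bernoulli_pmf p)) f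
     = (\<Sum>\<omega>\<in>Om E. f \<omega> * pmf (Pi_pmf E False (\<lambda>_. bernoulli_pmf p)) \<omega>)"
    apply (rule integral_measure_pmf_real)
    using finite_Om[OF assms(1)] set_Pi_pmf_subset[OF assms(1), of False "\<lambda>_. bernoulli_pmf p"]
    by (auto simp: Om_def)
  also have "\<dots> = (\<Sum>\<omega>\<in>Om E. wt p E \<omega> * f \<omega>)"
  proof (rule sum.cong)
    fix \<omega> assume "\<omega> \<in> Om E"
    then have "pmf (Pi_pmf E False (\<lambda>_. bernoulli_pmf p)) \<omega> = wt p E \<omega>"
      unfolding wt_def using assms
      by (subst pmf_Pi') (auto simp: Om_def intro!: prod.cong)
    then show "f \<omega> * pmf (Pi_pmf E False (\<lambda>_. bernoulli_pmf p)) \<omega> = wt p E \<omega> * f \<omega>" by simp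
  qed simp
  finally show ?thesis .
qed

lemma prob_sum:
  assumes "finite E" "0 \<le> p" "p \<le> 1"
  shows "measure_pmf.prob (Pi_pmf E False (\<lambda>_. bernoulli_pmf p)) S
         = (\<Sum>\<omega>\<in>Om E. wt p E \<omega> * indicator S \<omega>)"
proof -
  have "measure_pmf.prob (Pi_pmf E False (\<lambda>_. bernoulli_pmf p)) S
     = measure_pmf.expectation (Pi_pmf E False (\<lambda>_. bernoulli_pmf p)) (indicator S)"
    by simp
  also have "\<dots> = (\<Sum>\<omega>\<in>Om E. wt p E \<omega> * indicator S \<omega>)"
    by (rule expect_sum[OF assms])
  finally show ?thesis .
qed

lemma wt_sum1:
  assumes "finite E" "0 \<le> p" "p \<le> 1"
  shows "(\<Sum>\<omega>\<in>Om E. wt p E \<omega>) = 1"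
  using prob_sum[OF assms, of UNIV] by simp



type_synonym hist = "(nat set \<times> bool) list"

definition prb :: "hist \<Rightarrow> nat set set" where "prb h = fst ` set h"

lemma probes_length[simp]: "length (probes s \<omega> t) = t"
  by (induction t) auto

lemma probes_take: "i \<le> t \<Longrightarrow> take i (probes s \<omega> t) = probes s \<omega> i"
proof (induction t)
  case 0 then show ?case by simp
next
  case (Suc t)
  show ?case
  proof (cases "i = Suc t")
    case True then show ?thesis by simp
  next
    case False then have "i \<le> t" using Suc by simp
    then show ?thesis using Suc by simp
  qed
qed

lemma probes_nth: "i < t \<Longrightarrow> probes s \<omega> t ! i = (s (probes s \<omega> i), \<omega> (s (probes s \<omega> i)))"
proof (induction t)
  case 0 then show ?case by simp
next
  case (Suc t)
  show ?case
  proof (cases "i = t")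
    case True then show ?thesis by (simp add: nth_append)
  next
    case False then have "i < t" using Suc by simp
    then show ?thesis using Suc by (simp add: nth_append)
  qed
qed

lemma probes_consistent: "(e, b) \<in> set (probes s \<omega> t) \<Longrightarrow> \<omega> e = b"
  by (induction t) auto

lemma probes_agree: "(\<And>e. e \<in> prb (probes s \<omega> t) \<Longrightarrow> \<omega>' e = \<omega> e) \<Longrightarrow> probes s \<omega>' t = probes s \<omega> t"
proof (induction t)
  case 0 then show ?case by simp
next
  case (Suc t)
  have IH: "probes s \<omega>' t = probes s \<omega> t"
    using Suc.IH Suc.prems by (auto simp: prb_def)
  have "s (probes s \<omega> t) \<in> prb (probes s \<omega> (Suc t))" by (simp add: prb_def)
  then have "\<omega>' (s (probes s \<omega> t)) = \<omega> (s (probes s \<omega> t))" using Suc.prems by blast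
  then show ?case using IH by simp
qed

lemma probes_Suc_prb: "prb (probes s \<omega> (Suc t)) = insert (s (probes s \<omega> t)) (prb (probes s \<omega> t))"
  by (auto simp: prb_def)

definition hat :: "real \<Rightarrow> (hist \<Rightarrow> nat set) \<Rightarrow> (hist \<Rightarrow> real) \<Rightarrow> hist \<Rightarrow> real" where
  "hat p s G h = (if s h \<in> prb h then G (h @ [(s h, (s h, True) \<in> set h)])
                  else p * G (h @ [(s h, True)]) + (1 - p) * G (h @ [(s h, False)]))"

lemma wt_split:
  assumes "finite E" "e \<in> E"
  shows "wt p E \<omega> = (if \<omega> e then p else 1 - p) * (\<Prod>x\<in>E-{e}. if \<omega> x then p else 1 - p)"
  unfolding wt_def using assms by (simp add: prod.remove)

lemma wt_upd_rest:
  "(\<Prod>x\<in>E-{e}. if fun_upd \<omega> e b x then p else 1 - p) = (\<Prod>x\<in>E-{e}. if \<omega> x then p else 1 - p)"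
  by (intro prod.cong) auto

lemma step:
  assumes fin: "finite E" and p: "0 \<le> p" "p \<le> 1"
    and inE: "\<And>\<omega>. \<omega> \<in> Om E \<Longrightarrow> s (probes s \<omega> t) \<in> E"
  shows "(\<Sum>\<omega>\<in>Om E. wt p E \<omega> * G (probes s \<omega> (Suc t)))
       = (\<Sum>\<omega>\<in>Om E. wt p E \<omega> * hat p s G (probes s \<omega> t))"
proof -
  define h where "h \<omega> = probes s \<omega> t" for \<omega>
  define e where "e \<omega> = s (h \<omega>)" for \<omega>
  define fr where "fr \<omega> = (e \<omega> \<notin> prb (h \<omega>))" for \<omega>
  define \<iota> where "\<iota> \<omega> = (if fr \<omega> then fun_upd \<omega> (e \<omega>) (\<not> \<omega> (e \<omega>)) else \<omega>)" for \<omega>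
  define L where "L \<omega> = wt p E \<omega> * G (probes s \<omega> (Suc t))" for \<omega>
  define R where "R \<omega> = wt p E \<omega> * hat p s G (probes s \<omega> t)" for \<omega>
  define W where "W \<omega> = (\<Prod>x\<in>E-{e \<omega>}. if \<omega> x then p else 1 - p)" for \<omega>
  have hi: "h (\<iota> \<omega>) = h \<omega>" for \<omega>
  proof (cases "fr \<omega>")
    case True
    have "probes s (fun_upd \<omega> (e \<omega>) (\<not> \<omega> (e \<omega>))) t = probes s \<omega> t"
      by (rule probes_agree) (use True in \<open>auto simp: fr_def h_def\<close>)
    then show ?thesis using True by (simp add: \<iota>_def h_def)
  qed (simp add: \<iota>_def)
  have ei: "e (\<iota> \<omega>) = e \<omega>" for \<omega> using hi by (simp add: e_def)
  have fri: "fr (\<iota> \<omega>) = fr \<omega>" for \<omega> using hi ei by (simp add: fr_def)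
  have ii: "\<iota> (\<iota> \<omega>) = \<omega>" for \<omega>
  proof (cases "fr \<omega>")
    case True
    have a: "\<iota> \<omega> = fun_upd \<omega> (e \<omega>) (\<not> \<omega> (e \<omega>))" using True by (simp add: \<iota>_def)
    have "fr (\<iota> \<omega>)" using True fri by simp
    then have "\<iota> (\<iota> \<omega>) = fun_upd (\<iota> \<omega>) (e (\<iota> \<omega>)) (\<not> (\<iota> \<omega>) (e (\<iota> \<omega>)))"
      by (simp add: \<iota>_def)
    then show ?thesis unfolding ei by (simp add: a)
  qed (simp add: \<iota>_def)
  have iOm: "\<iota> \<omega> \<in> Om E" if "\<omega> \<in> Om E" for \<omega>
    using that inE[OF that] by (auto simp: \<iota>_def Om_def h_def e_def)
  have bij: "bij_betw \<iota> (Om E) (Om E)"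
    by (rule bij_betwI[where g = \<iota>]) (auto simp: iOm ii)
  have Wi: "W (\<iota> \<omega>) = W \<omega>" for \<omega>
    unfolding W_def ei by (auto simp: \<iota>_def wt_upd_rest)
  have key: "L \<omega> + L (\<iota> \<omega>) = R \<omega> + R (\<iota> \<omega>)" if om: "\<omega> \<in> Om E" for \<omega>
  proof (cases "fr \<omega>")
    case False
    then have "\<iota> \<omega> = \<omega>" by (simp add: \<iota>_def)
    moreover have "L \<omega> = R \<omega>"
    proof -
      have "e \<omega> \<in> prb (h \<omega>)" using False by (simp add: fr_def)
      then obtain b where b: "(e \<omega>, b) \<in> set (h \<omega>)" by (auto simp: prb_def)
      then have "\<omega> (e \<omega>) = b" unfolding h_def by (rule probes_consistent)
      then have "((e \<omega>, True) \<in> set (h \<omega>)) = \<omega> (e \<omega>)" using b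
        by (metis (full_types) h_def probes_consistent)
      then show ?thesis using \<open>e \<omega> \<in> prb (h \<omega>)\<close>
        by (simp add: L_def R_def hat_def h_def e_def)
    qed
    ultimately show ?thesis by simp
  next
    case True
    have eE: "e \<omega> \<in> E" using inE[OF om] by (simp add: e_def h_def)
    have ws: "wt p E \<omega>' = (if \<omega>' (e \<omega>) then p else 1 - p) * W \<omega>'" if "e \<omega>' = e \<omega>" for \<omega>'
      using wt_split[OF fin eE, of p \<omega>'] that by (simp add: W_def)
    have nf: "s (h \<omega>) \<notin> prb (h \<omega>)" using True by (simp add: fr_def e_def)
    have io: "\<iota> \<omega> = fun_upd \<omega> (e \<omega>) (\<not> \<omega> (e \<omega>))" using True by (simp add: \<iota>_def)
    have Lw: "L \<omega>' = wt p E \<omega>' * G (h \<omega>' @ [(e \<omega>', \<omega>' (e \<omega>'))])" for \<omega>'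
      by (simp add: L_def h_def e_def)
    have Rw: "R \<omega>' = wt p E \<omega>' * (p * G (h \<omega> @ [(e \<omega>, True)]) + (1 - p) * G (h \<omega> @ [(e \<omega>, False)]))"
      if "h \<omega>' = h \<omega>" for \<omega>'
      using that nf by (simp add: R_def hat_def h_def e_def)
    have "L \<omega> + L (\<iota> \<omega>) = W \<omega> * (p * G (h \<omega> @ [(e \<omega>, True)]) + (1 - p) * G (h \<omega> @ [(e \<omega>, False)]))"
      unfolding Lw hi ei ws[OF ei] ws[OF refl] Wi
      by (cases "\<omega> (e \<omega>)") (auto simp: io algebra_simps)
    moreover have "R \<omega> + R (\<iota> \<omega>) = W \<omega> * (p * G (h \<omega> @ [(e \<omega>, True)]) + (1 - p) * G (h \<omega> @ [(e \<omega>, False)]))"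
      unfolding Rw[OF refl] Rw[OF hi] ws[OF ei] ws[OF refl] Wi
      by (cases "\<omega> (e \<omega>)") (auto simp: io algebra_simps)
    ultimately show ?thesis by simp
  qed
  have sL: "sum L (Om E) = sum (L \<circ> \<iota>) (Om E)"
    using sum.reindex_bij_betw[OF bij, of L] by simp
  have sR: "sum R (Om E) = sum (R \<circ> \<iota>) (Om E)"
    using sum.reindex_bij_betw[OF bij, of R] by simp
  have "2 * sum L (Om E) = sum (\<lambda>\<omega>. L \<omega> + L (\<iota> \<omega>)) (Om E)"
    using sL by (simp add: sum.distrib)
  also have "\<dots> = sum (\<lambda>\<omega>. R \<omega> + R (\<iota> \<omega>)) (Om E)"
    using key by (intro sum.cong) auto
  also have "\<dots> = 2 * sum R (Om E)"
    using sR by (simp add: sum.distrib)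
  finally show ?thesis by (simp add: L_def R_def)
qed



lemma mart_le:
  assumes fin: "finite E" and p: "0 \<le> p" "p \<le> 1"
    and inE: "\<And>\<omega> t. \<omega> \<in> Om E \<Longrightarrow> s (probes s \<omega> t) \<in> E"
    and sup: "\<And>\<omega> t. \<omega> \<in> Om E \<Longrightarrow> hat p s G (probes s \<omega> t) \<le> G (probes s \<omega> t)"
  shows "(\<Sum>\<omega>\<in>Om E. wt p E \<omega> * G (probes s \<omega> t)) \<le> G []"
proof (induction t)
  case 0 then show ?case using wt_sum1[OF fin p] by (simp flip: sum_distrib_right)
next
  case (Suc t)
  have "(\<Sum>\<omega>\<in>Om E. wt p E \<omega> * G (probes s \<omega> (Suc t)))
      = (\<Sum>\<omega>\<in>Om E. wt p E \<omega> * hat p s G (probes s \<omega> t))"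
    by (rule step[OF fin p]) (rule inE)
  also have "\<dots> \<le> (\<Sum>\<omega>\<in>Om E. wt p E \<omega> * G (probes s \<omega> t))"
    by (intro sum_mono mult_left_mono sup wt_nonneg p)
  finally show ?case using Suc by simp
qed

lemma mart_eq:
  assumes fin: "finite E" and p: "0 \<le> p" "p \<le> 1"
    and inE: "\<And>\<omega> t. \<omega> \<in> Om E \<Longrightarrow> s (probes s \<omega> t) \<in> E"
    and eq: "\<And>h. hat p s G h = G h"
  shows "(\<Sum>\<omega>\<in>Om E. wt p E \<omega> * G (probes s \<omega> t)) = G []"
proof (induction t)
  case 0 then show ?case using wt_sum1[OF fin p] by (simp flip: sum_distrib_right)
next
  case (Suc t)
  have "(\<Sum>\<omega>\<in>Om E. wt p E \<omega> * G (probes s \<omega> (Suc t)))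
      = (\<Sum>\<omega>\<in>Om E. wt p E \<omega> * hat p s G (probes s \<omega> t))"
    by (rule step[OF fin p]) (rule inE)
  also have "\<dots> = (\<Sum>\<omega>\<in>Om E. wt p E \<omega> * G (probes s \<omega> t))"
    by (simp add: eq)
  finally show ?case using Suc by simp
qed

definition Aof :: "hist \<Rightarrow> nat set set" where "Aof h = {e. (e, True) \<in> set h}"

lemma Aof_prb: "Aof h \<subseteq> prb h" unfolding Aof_def prb_def by (auto intro: rev_image_eqI)
lemma finite_prb[simp]: "finite (prb h)" by (simp add: prb_def)
lemma finite_Aof[simp]: "finite (Aof h)" by (rule finite_subset[OF Aof_prb]) simp

lemma Aof_snoc: "Aof (h @ [(e, b)]) = (if b then insert e (Aof h) else Aof h)"
  unfolding Aof_def by auto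
lemma Aof_old: "Aof (h @ [(e, (e, True) \<in> set h)]) = Aof h"
proof (cases "(e, True) \<in> set h")
  case True then have "e \<in> Aof h" by (simp add: Aof_def)
  then show ?thesis using True by (simp add: Aof_snoc insert_absorb)
qed (simp add: Aof_snoc)
lemma prb_old: "e \<in> prb h \<Longrightarrow> prb (h @ [(e, b)]) = prb h"
  by (auto simp: prb_def)
lemma Aof_T: "Aof (h @ [(e, True)]) = insert e (Aof h)" by (auto simp: Aof_def)
lemma Aof_F: "Aof (h @ [(e, False)]) = Aof h" by (auto simp: Aof_def)
lemma prb_snoc: "prb (h @ [(e, b)]) = insert e (prb h)" by (auto simp: prb_def)

definition G2 :: "real \<Rightarrow> hist \<Rightarrow> real" where
  "G2 p h = real (card (Aof h)) - p * real (card (prb h))"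

lemma hat_G2: "hat p s (G2 p) h = G2 p h"
proof (cases "s h \<in> prb h")
  case True then show ?thesis by (simp add: hat_def G2_def Aof_old prb_old)
next
  case False
  then have "s h \<notin> Aof h" using Aof_prb by (meson subsetD)
  then show ?thesis using False
    by (simp add: hat_def G2_def Aof_T Aof_F prb_snoc algebra_simps)
qed

definition openv :: "nat \<Rightarrow> hist \<Rightarrow> bool" where
  "openv v h \<longleftrightarrow> (\<exists>e. (e, True) \<in> set h \<and> v \<in> e)"

fun stopv :: "nat \<Rightarrow> hist \<Rightarrow> hist" where
  "stopv v [] = []"
| "stopv v (x # xs) = (if snd x \<and> v \<in> fst x then [x] else x # stopv v xs)"

lemma openv_Cons: "openv v (y # l) \<longleftrightarrow> (snd y \<and> v \<in> fst y) \<or> openv v l"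
  by (cases y) (auto simp: openv_def)

lemma stopv_id: "\<not> openv v h \<Longrightarrow> stopv v h = h"
  by (induction h) (auto simp: openv_def)

lemma stopv_snoc: "stopv v (h @ [x]) = (if openv v h then stopv v h else h @ [x])"
proof (induction h)
  case Nil then show ?case by (auto simp: openv_def)
next
  case (Cons y ys)
  then show ?case by (cases y) (auto simp: openv_def stopv_id)
qed

lemma openv_stopv: "openv v h \<Longrightarrow> openv v (stopv v h)"
  by (induction h) (auto simp: openv_def)

lemma stopv_mem: "x \<in> set (stopv v h) \<Longrightarrow> \<exists>i < length h. h ! i = x \<and> \<not> openv v (take i h)"
proof (induction h)
  case Nil then show ?case by simp
next
  case (Cons y ys)
  show ?case
  proof (cases "snd y \<and> v \<in> fst y")
    case True then show ?thesis using Cons.prems by (auto simp: openv_def)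
  next
    case False
    then have "x = y \<or> x \<in> set (stopv v ys)" using Cons.prems by auto
    then show ?thesis
    proof
      assume "x = y" then show ?thesis by (auto simp: openv_def)
    next
      assume "x \<in> set (stopv v ys)"
      then obtain i where "i < length ys" "ys ! i = x" "\<not> openv v (take i ys)" using Cons.IH by blast
      then show ?thesis using False
        by (intro exI[of _ "Suc i"]) (simp add: openv_Cons)
    qed
  qed
qed

definition AV :: "nat \<Rightarrow> hist \<Rightarrow> nat set set" where "AV v h = {e \<in> Aof h. v \<in> e}"
definition PVs :: "nat \<Rightarrow> hist \<Rightarrow> nat set set" where "PVs v h = {e \<in> prb h. v \<in> e}"

definition G1 :: "real \<Rightarrow> nat \<Rightarrow> hist \<Rightarrow> real" where
  "G1 p v h = real (card (AV v (stopv v h))) - p * real (card (PVs v (stopv v h)))"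

lemma hat_G1: "hat p s (G1 p v) h = G1 p v h"
proof (cases "openv v h")
  case True
  then show ?thesis by (simp add: hat_def G1_def stopv_snoc algebra_simps)
next
  case False
  note sv = stopv_snoc[of v h] stopv_id[OF False]
  show ?thesis
  proof (cases "s h \<in> prb h")
    case True then show ?thesis using False
      by (simp add: hat_def G1_def sv AV_def PVs_def Aof_old prb_old)
  next
    case nf: False
    then have nA: "s h \<notin> Aof h" using Aof_prb by (meson subsetD)
    have fA: "finite {e \<in> Aof h. v \<in> e}" "finite {e \<in> prb h. v \<in> e}" by auto
    show ?thesis
    proof (cases "v \<in> s h")
      case True
      have "{e \<in> insert (s h) (Aof h). v \<in> e} = insert (s h) {e \<in> Aof h. v \<in> e}"
           "{e \<in> insert (s h) (prb h). v \<in> e} = insert (s h) {e \<in> prb h. v \<in> e}" using True by auto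
      then show ?thesis using False nf nA fA
        by (simp add: hat_def G1_def sv AV_def PVs_def Aof_T Aof_F prb_snoc algebra_simps)
    next
      case vf: False
      have "{e \<in> insert (s h) (Aof h). v \<in> e} = {e \<in> Aof h. v \<in> e}"
           "{e \<in> insert (s h) (prb h). v \<in> e} = {e \<in> prb h. v \<in> e}" using vf by auto
      then show ?thesis using False nf nA fA
        by (simp add: hat_def G1_def sv AV_def PVs_def Aof_T Aof_F prb_snoc algebra_simps)
    qed
  qed
qed



lemma finite_edges: "finite (edges n)"
  by (rule finite_subset[of _ "Pow {..<n}"]) (auto simp: edges_def)

lemma conn_cases: "conn F u x \<Longrightarrow> x = u \<or> (\<exists>f\<in>F. x \<in> f)"
  unfolding conn_def
proof (induction rule: rtrancl_induct)
  case base then show ?case by simp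
next
  case (step y z) then show ?case by auto
qed

lemma conn_mono: "F \<subseteq> F' \<Longrightarrow> conn F a b \<Longrightarrow> conn F' a b"
  unfolding conn_def by (erule rtrancl_mono[THEN subsetD, rotated]) auto

lemma found_open_Aof: "found_open h = Aof h" by (simp add: found_open_def Aof_def)

lemma probes_set_alg: "(e, b) \<in> set (probes s \<omega> t) \<Longrightarrow> \<exists>i<t. e = s (probes s \<omega> i)"
proof (induction t)
  case (Suc t)
  show ?case
  proof (cases "(e, b) \<in> set (probes s \<omega> t)")
    case True then show ?thesis using Suc.IH less_SucI by blast
  next
    case False then show ?thesis using Suc.prems by auto
  qed
qed simp

lemma card_prb_le: "card (prb h) \<le> length h"
proof -
  have "card (fst ` set h) \<le> card (set h)" by (rule card_image_le) simp
  then show ?thesis unfolding prb_def using card_length[of h] by linarith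
qed

lemma loc_bound:
  assumes lr: "local_router n u v alg" and uv: "u \<noteq> v"
  shows "card (PVs v (stopv v (probes alg \<omega> K))) \<le> 1 + 2 * card (Aof (probes alg \<omega> K))"
proof -
  define H where "H = probes alg \<omega> K"
  have loc: "alg (probes alg \<omega> i) \<in> edges n \<and> (\<exists>x\<in>alg (probes alg \<omega> i). conn (found_open (probes alg \<omega> i)) u x)" for i
    using lr unfolding local_router_def by blast
  have Aed: "f \<in> edges n" if "f \<in> Aof H" for f
  proof -
    from that have "(f, True) \<in> set H" by (simp add: Aof_def)
    then obtain i where "f = alg (probes alg \<omega> i)" unfolding H_def using probes_set_alg by blast
    then show ?thesis using loc by simp
  qed
  have fin2: "finite f \<and> card f = 2" if "f \<in> Aof H" for f
    using Aed[OF that] by (simp add: edges_def card_ge_0_finite)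
  have sub: "PVs v (stopv v H) \<subseteq> (\<lambda>x. {x, v}) ` ({u} \<union> \<Union> (Aof H))"
  proof
    fix e assume "e \<in> PVs v (stopv v H)"
    then obtain b where eb: "(e, b) \<in> set (stopv v H)" and ve: "v \<in> e"
      by (auto simp: PVs_def prb_def)
    from stopv_mem[OF eb] obtain i where i: "i < length H" "H ! i = (e, b)" "\<not> openv v (take i H)"
      by blast
    have iK: "i < K" using i by (simp add: H_def)
    have ti: "take i H = probes alg \<omega> i" using iK by (simp add: H_def probes_take)
    have ee: "e = alg (probes alg \<omega> i)" using i(2) probes_nth[OF iK, of alg \<omega>] by (simp add: H_def)
    obtain x where xe: "x \<in> e" and cx: "conn (found_open (probes alg \<omega> i)) u x"
      using loc[of i] ee by blast
    have eE: "e \<in> edges n" using loc[of i] ee by simp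
    have fsub: "found_open (probes alg \<omega> i) \<subseteq> Aof H"
      unfolding found_open_Aof Aof_def ti[symmetric] using set_take_subset by fastforce
    have xv: "x \<noteq> v"
    proof
      assume "x = v"
      then have "\<exists>f\<in>found_open (probes alg \<omega> i). v \<in> f" using conn_cases[OF cx] uv by auto
      then have "openv v (probes alg \<omega> i)" by (auto simp: openv_def found_open_def)
      then show False using i(3) ti by simp
    qed
    have "card e = 2" using eE by (simp add: edges_def)
    then obtain a c where ac: "e = {a, c}" "a \<noteq> c" by (auto simp: card_2_iff)
    have exv: "e = {x, v}" using ac xe ve xv by auto
    have "x \<in> {u} \<union> \<Union> (Aof H)" using conn_cases[OF cx] fsub by auto
    then show "e \<in> (\<lambda>x. {x, v}) ` ({u} \<union> \<Union> (Aof H))" using exv by blast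
  qed
  have finU: "finite (\<Union> (Aof H))" using fin2 by auto
  have "card (PVs v (stopv v H)) \<le> card ((\<lambda>x. {x, v}) ` ({u} \<union> \<Union> (Aof H)))"
    by (rule card_mono) (use finU sub in auto)
  also have "\<dots> \<le> card ({u} \<union> \<Union> (Aof H))" by (rule card_image_le) (use finU in auto)
  also have "\<dots> \<le> card {u} + card (\<Union> (Aof H))" by (rule card_Un_le)
  also have "card (\<Union> (Aof H)) \<le> sum card (Aof H)" by (rule card_Union_le_sum_card)
  also have "sum card (Aof H) = sum (\<lambda>_. 2) (Aof H)" using fin2 by (intro sum.cong) auto
  finally show ?thesis by (simp add: H_def)
qed

lemma route_bound:
  assumes lr: "local_router n u v alg" and uv: "u \<noteq> v" and p: "0 \<le> p" "p \<le> 1"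
  shows "(\<Sum>\<omega>\<in>Om (edges n). wt p (edges n) \<omega> * indicator {\<omega>. openv v (probes alg \<omega> K)} \<omega>)
         \<le> p * (1 + 2 * p * K)"
proof -
  define E where "E = edges n"
  have fin: "finite E" by (simp add: E_def finite_edges)
  have inE: "\<And>\<omega> t. \<omega> \<in> Om E \<Longrightarrow> alg (probes alg \<omega> t) \<in> E"
    using lr unfolding local_router_def E_def by blast
  define w where "w \<omega> = wt p E \<omega>" for \<omega>
  have w0: "0 \<le> w \<omega>" for \<omega> using p by (simp add: w_def wt_nonneg)
  have sw: "sum w (Om E) = 1" using wt_sum1[OF fin p] by (simp add: w_def)
  define H where "H \<omega> = probes alg \<omega> K" for \<omega>
  have M1: "(\<Sum>\<omega>\<in>Om E. w \<omega> * G1 p v (H \<omega>)) = G1 p v []"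
    unfolding w_def H_def apply (rule mart_eq[OF fin p]) apply (erule inE) apply (rule hat_G1) done
  have M2: "(\<Sum>\<omega>\<in>Om E. w \<omega> * G2 p (H \<omega>)) = G2 p []"
    unfolding w_def H_def apply (rule mart_eq[OF fin p]) apply (erule inE) apply (rule hat_G2) done
  have G10: "G1 p v [] = 0" by (simp add: G1_def AV_def PVs_def Aof_def prb_def)
  have G20: "G2 p [] = 0" by (simp add: G2_def Aof_def prb_def)
  have e1: "(\<Sum>\<omega>\<in>Om E. w \<omega> * card (AV v (stopv v (H \<omega>)))) = p * (\<Sum>\<omega>\<in>Om E. w \<omega> * card (PVs v (stopv v (H \<omega>))))"
  proof -
    have "(\<Sum>\<omega>\<in>Om E. w \<omega> * G1 p v (H \<omega>)) = (\<Sum>\<omega>\<in>Om E. w \<omega> * card (AV v (stopv v (H \<omega>)))) - p * (\<Sum>\<omega>\<in>Om E. w \<omega> * card (PVs v (stopv v (H \<omega>))))"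
      unfolding G1_def right_diff_distrib sum_subtractf sum_distrib_left by (simp add: mult.left_commute)
    then show ?thesis using M1 G10 by linarith
  qed
  have e2: "(\<Sum>\<omega>\<in>Om E. w \<omega> * card (Aof (H \<omega>))) = p * (\<Sum>\<omega>\<in>Om E. w \<omega> * card (prb (H \<omega>)))"
  proof -
    have "(\<Sum>\<omega>\<in>Om E. w \<omega> * G2 p (H \<omega>)) = (\<Sum>\<omega>\<in>Om E. w \<omega> * card (Aof (H \<omega>))) - p * (\<Sum>\<omega>\<in>Om E. w \<omega> * card (prb (H \<omega>)))"
      unfolding G2_def right_diff_distrib sum_subtractf sum_distrib_left by (simp add: mult.left_commute)
    then show ?thesis using M2 G20 by linarith
  qed
  have e3: "(\<Sum>\<omega>\<in>Om E. w \<omega> * card (prb (H \<omega>))) \<le> (\<Sum>\<omega>\<in>Om E. w \<omega> * K)"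
    using card_prb_le[of "H _"] w0 by (intro sum_mono mult_left_mono) (auto simp: H_def)
  have ind: "indicator {\<omega>. openv v (H \<omega>)} \<omega> \<le> real (card (AV v (stopv v (H \<omega>))))" for \<omega>
  proof (cases "openv v (H \<omega>)")
    case True
    then have "openv v (stopv v (H \<omega>))" by (rule openv_stopv)
    then have "AV v (stopv v (H \<omega>)) \<noteq> {}" by (auto simp: openv_def AV_def Aof_def)
    moreover have "finite (AV v (stopv v (H \<omega>)))" by (simp add: AV_def)
    ultimately have "card (AV v (stopv v (H \<omega>))) \<ge> 1" by (simp add: Suc_le_eq card_gt_0_iff)
    then show ?thesis using True by simp
  qed simp
  have "(\<Sum>\<omega>\<in>Om E. w \<omega> * indicator {\<omega>. openv v (H \<omega>)} \<omega>) \<le> (\<Sum>\<omega>\<in>Om E. w \<omega> * card (AV v (stopv v (H \<omega>))))"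
    using ind w0 by (intro sum_mono mult_left_mono) auto
  also have "\<dots> = p * (\<Sum>\<omega>\<in>Om E. w \<omega> * card (PVs v (stopv v (H \<omega>))))" by (rule e1)
  also have "\<dots> \<le> p * (\<Sum>\<omega>\<in>Om E. w \<omega> * (1 + 2 * card (Aof (H \<omega>))))"
  proof -
    have "real (card (PVs v (stopv v (H \<omega>)))) \<le> 1 + 2 * real (card (Aof (H \<omega>)))" for \<omega>
      using loc_bound[OF lr uv, of \<omega> K] unfolding H_def by linarith
    then show ?thesis using w0 p by (intro mult_left_mono sum_mono) auto
  qed
  also have "\<dots> = p * (1 + 2 * (\<Sum>\<omega>\<in>Om E. w \<omega> * card (Aof (H \<omega>))))"
  proof -
    have "(\<Sum>\<omega>\<in>Om E. w \<omega> * (1 + 2 * real (card (Aof (H \<omega>))))) = sum w (Om E) + 2 * (\<Sum>\<omega>\<in>Om E. w \<omega> * card (Aof (H \<omega>)))"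
      unfolding distrib_left sum.distrib sum_distrib_left by (simp add: mult.left_commute)
    then show ?thesis using sw by simp
  qed
  also have "\<dots> \<le> p * (1 + 2 * (p * K))"
  proof -
    have "(\<Sum>\<omega>\<in>Om E. w \<omega> * K) = K" using sw by (simp flip: sum_distrib_right)
    then have "(\<Sum>\<omega>\<in>Om E. w \<omega> * card (Aof (H \<omega>))) \<le> p * K"
      using e2 mult_left_mono[OF e3 p(1)] by simp
    then show ?thesis using p by (intro mult_left_mono) auto
  qed
  finally show ?thesis by (simp add: w_def H_def E_def mult.assoc)
qed



definition Rr :: "nat \<Rightarrow> nat \<Rightarrow> hist \<Rightarrow> nat set" where
  "Rr n u h = {w. w < n \<and> conn (Aof h) u w}"

definition cross :: "nat \<Rightarrow> nat \<Rightarrow> hist \<Rightarrow> nat set set" where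
  "cross n u h = {e \<in> edges n. e \<notin> prb h \<and> (\<exists>a b. e = {a, b} \<and> a \<in> Rr n u h \<and> b < n \<and> b \<notin> Rr n u h)}"

definition explore :: "nat \<Rightarrow> nat \<Rightarrow> hist \<Rightarrow> nat set" where
  "explore n u h = (if cross n u h \<noteq> {} then (SOME e. e \<in> cross n u h)
                    else if h = [] then {0, 1} else fst (hd h))"

lemma finite_Rr: "finite (Rr n u h)" by (rule finite_subset[of _ "{..<n}"]) (auto simp: Rr_def)

lemma conn_refl: "conn F u u" by (simp add: conn_def)

lemma conn_edge: "conn F u a \<Longrightarrow> {a, b} \<in> F \<Longrightarrow> conn F u b"
  unfolding conn_def by (rule rtrancl_into_rtrancl) auto

lemma Rr_nil: "u < n \<Longrightarrow> Rr n u [] = {u}"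
  using conn_cases[of "{}" u] by (auto simp: Rr_def Aof_def conn_refl)

lemma cross_nil:
  assumes "u < n" "2 \<le> n" shows "cross n u [] \<noteq> {}"
proof -
  define b where "b = (if u = 0 then 1 else (0::nat))"
  have b: "b < n" "b \<noteq> u" using assms by (auto simp: b_def)
  have "{u, b} \<in> edges n" using assms b by (auto simp: edges_def)
  then have "{u, b} \<in> cross n u []" using b assms by (auto simp: cross_def Rr_nil prb_def)
  then show ?thesis by blast
qed

lemma explore_cross: "cross n u h \<noteq> {} \<Longrightarrow> explore n u h \<in> cross n u h"
  unfolding explore_def by (simp add: some_in_eq)

lemma explore_cases:
  assumes "cross n u [] \<noteq> {}"
  shows "explore n u h \<in> cross n u h \<or> explore n u h \<in> prb h"
proof (cases "cross n u h \<noteq> {}")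
  case True then show ?thesis using explore_cross by blast
next
  case False
  then have "h \<noteq> []" using assms by auto
  then have "explore n u h = fst (hd h)" using False by (simp add: explore_def)
  then show ?thesis using \<open>h \<noteq> []\<close> by (simp add: prb_def)
qed

lemma cross_edges: "cross n u h \<subseteq> edges n" by (auto simp: cross_def)

lemma explore_edges:
  assumes "cross n u [] \<noteq> {}"
  shows "fst ` set (probes (explore n u) \<omega> t) \<subseteq> edges n"
proof (induction t)
  case 0 then show ?case by simp
next
  case (Suc t)
  have "explore n u (probes (explore n u) \<omega> t) \<in> edges n"
    using explore_cases[OF assms, of "probes (explore n u) \<omega> t"] cross_edges Suc
    by (auto simp: prb_def)
  then show ?case using Suc by auto
qed

lemma explore_inE:
  assumes "cross n u [] \<noteq> {}"
  shows "explore n u (probes (explore n u) \<omega> t) \<in> edges n"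
  using explore_edges[OF assms, of \<omega> "Suc t"] by auto

definition Phi :: "nat \<Rightarrow> nat \<Rightarrow> real \<Rightarrow> real \<Rightarrow> hist \<Rightarrow> real" where
  "Phi n u \<theta> lm h = exp (- \<theta> * card (Rr n u h) + lm * card (prb h))"

lemma hat_Phi:
  assumes cn: "cross n u [] \<noteq> {}" and p: "0 \<le> p" "p \<le> 1" and th: "0 \<le> \<theta>"
    and lam: "exp lm * (1 - p + p * exp (- \<theta>)) = 1"
  shows "hat p (explore n u) (Phi n u \<theta> lm) h \<le> Phi n u \<theta> lm h"
proof (cases "explore n u h \<in> prb h")
  case True
  then show ?thesis by (simp add: hat_def Phi_def Aof_old prb_old Rr_def)
next
  case False
  define e where "e = explore n u h"
  have ec: "e \<in> cross n u h" using explore_cases[OF cn, of h] False by (simp add: e_def)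
  then obtain a b where ab: "e = {a, b}" "a \<in> Rr n u h" "b < n" "b \<notin> Rr n u h"
    by (auto simp: cross_def)
  have ne: "e \<notin> prb h" using False by (simp add: e_def)
  define r where "r = card (Rr n u h)"
  define k where "k = card (prb h)"
  have pk: "card (prb (h @ [(e, bb)])) = Suc k" for bb
    using ne by (simp add: prb_snoc k_def)
  have RF: "Rr n u (h @ [(e, False)]) = Rr n u h" by (simp add: Rr_def Aof_F)
  have RT: "insert b (Rr n u h) \<subseteq> Rr n u (h @ [(e, True)])"
  proof -
    have sub: "Aof h \<subseteq> Aof (h @ [(e, True)])" by (auto simp: Aof_T)
    have "Rr n u h \<subseteq> Rr n u (h @ [(e, True)])"
      using conn_mono[OF sub] by (auto simp: Rr_def)
    moreover have "conn (Aof (h @ [(e, True)])) u b"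
    proof -
      have "conn (Aof (h @ [(e, True)])) u a" using ab(2) conn_mono[OF sub] by (auto simp: Rr_def)
      then show ?thesis by (rule conn_edge) (simp add: Aof_T ab(1))
    qed
    ultimately show ?thesis using ab(3) by (auto simp: Rr_def)
  qed
  have rT: "Suc r \<le> card (Rr n u (h @ [(e, True)]))"
  proof -
    have "card (insert b (Rr n u h)) = Suc r" using ab(4) finite_Rr by (simp add: r_def)
    then show ?thesis using card_mono[OF finite_Rr RT] by simp
  qed
  have PT: "Phi n u \<theta> lm (h @ [(e, True)]) \<le> exp (- \<theta> * (r + 1) + lm * (k + 1))"
    unfolding Phi_def pk using rT th by (simp add: mult_left_mono)
  have PF: "Phi n u \<theta> lm (h @ [(e, False)]) = exp (- \<theta> * r + lm * (k + 1))"
    unfolding Phi_def pk RF by (simp add: r_def)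
  have "hat p (explore n u) (Phi n u \<theta> lm) h = p * Phi n u \<theta> lm (h @ [(e, True)]) + (1 - p) * Phi n u \<theta> lm (h @ [(e, False)])"
    using False by (simp add: hat_def e_def)
  also have "\<dots> \<le> p * exp (- \<theta> * (r + 1) + lm * (k + 1)) + (1 - p) * exp (- \<theta> * r + lm * (k + 1))"
    using PT PF p by (simp add: mult_left_mono)
  also have "\<dots> = exp (- \<theta> * r + lm * k) * (exp lm * (1 - p + p * exp (- \<theta>)))"
    by (simp add: algebra_simps exp_add[symmetric])
  also have "\<dots> = Phi n u \<theta> lm h" using lam by (simp add: Phi_def r_def k_def)
  finally show ?thesis .
qed



lemma Rr_sub: "Rr n u h \<subseteq> {..<n}" by (auto simp: Rr_def)

lemma cross_empty_card:
  assumes "cross n u h = {}"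
  shows "card (Rr n u h) * (n - card (Rr n u h)) \<le> card (prb h)"
proof -
  define R where "R = Rr n u h"
  define f where "f = (\<lambda>(a::nat, b::nat). {a, b})"
  have sub: "f ` (R \<times> ({..<n} - R)) \<subseteq> prb h"
  proof
    fix e assume "e \<in> f ` (R \<times> ({..<n} - R))"
    then obtain a b where ab: "a \<in> R" "b < n" "b \<notin> R" "e = {a, b}" by (auto simp: f_def)
    have "a < n" using ab(1) Rr_sub by (auto simp: R_def)
    moreover have "a \<noteq> b" using ab by auto
    ultimately have "e \<in> edges n" using ab by (auto simp: edges_def)
    then show "e \<in> prb h" using assms ab unfolding cross_def R_def by blast
  qed
  have inj: "inj_on f (R \<times> ({..<n} - R))"
    by (rule inj_onI) (auto simp: f_def doubleton_eq_iff)
  have fin: "finite R" by (simp add: R_def finite_Rr)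
  have "card (R \<times> ({..<n} - R)) = card R * (n - card R)"
    using Rr_sub fin by (simp add: R_def card_cartesian_product card_Diff_subset)
  moreover have "card (f ` (R \<times> ({..<n} - R))) = card (R \<times> ({..<n} - R))"
    by (rule card_image[OF inj])
  moreover have "card (f ` (R \<times> ({..<n} - R))) \<le> card (prb h)"
    by (rule card_mono[OF finite_prb sub])
  ultimately show ?thesis by (simp add: R_def)
qed

lemma cross_stay:
  assumes cn: "cross n u [] \<noteq> {}" and c0: "cross n u (probes (explore n u) \<omega> t) = {}"
  shows "cross n u (probes (explore n u) \<omega> (Suc t)) = {}"
proof -
  define h where "h = probes (explore n u) \<omega> t"
  define e where "e = explore n u h"
  have hne: "h \<noteq> []" using cn c0 by (auto simp: h_def)
  have e: "e = fst (hd h)" using c0 hne by (simp add: e_def explore_def h_def)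
  then have "(e, snd (hd h)) \<in> set h" using hne by simp
  then have eprb: "e \<in> prb h" unfolding prb_def by (rule rev_image_eqI) simp
  have cons: "\<And>b. (e, b) \<in> set h \<Longrightarrow> \<omega> e = b" unfolding h_def by (rule probes_consistent)
  have val: "((e, True) \<in> set h) = \<omega> e"
  proof -
    have "\<omega> e = snd (hd h)" using cons \<open>(e, snd (hd h)) \<in> set h\<close> by blast
    then show ?thesis using cons \<open>(e, snd (hd h)) \<in> set h\<close> by (cases "\<omega> e") auto
  qed
  have eq: "probes (explore n u) \<omega> (Suc t) = h @ [(e, (e, True) \<in> set h)]"
    using val by (simp add: h_def e_def)
  have "Aof (probes (explore n u) \<omega> (Suc t)) = Aof h" unfolding eq by (rule Aof_old)
  moreover have "prb (probes (explore n u) \<omega> (Suc t)) = prb h" unfolding eq by (rule prb_old[OF eprb])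
  ultimately have "cross n u (probes (explore n u) \<omega> (Suc t)) = cross n u h"
    by (simp add: cross_def Rr_def)
  then show ?thesis using c0 by (simp add: h_def)
qed

lemma card_prb_run:
  assumes cn: "cross n u [] \<noteq> {}"
  shows "cross n u (probes (explore n u) \<omega> t) \<noteq> {} \<Longrightarrow> card (prb (probes (explore n u) \<omega> t)) = t"
proof (induction t)
  case 0 then show ?case by (simp add: prb_def)
next
  case (Suc t)
  have c: "cross n u (probes (explore n u) \<omega> t) \<noteq> {}" using cross_stay[OF cn] Suc.prems by blast
  then have "explore n u (probes (explore n u) \<omega> t) \<in> cross n u (probes (explore n u) \<omega> t)"
    by (rule explore_cross)
  then have "explore n u (probes (explore n u) \<omega> t) \<notin> prb (probes (explore n u) \<omega> t)"
    by (simp add: cross_def)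
  then show ?case using Suc.IH[OF c] unfolding probes_Suc_prb[of "explore n u" \<omega> t]
    by (simp add: card_insert_disjoint)
qed

lemma explore_term:
  assumes cn: "cross n u [] \<noteq> {}"
  shows "cross n u (probes (explore n u) \<omega> (Suc (card (edges n)))) = {}"
proof (rule ccontr)
  assume a: "cross n u (probes (explore n u) \<omega> (Suc (card (edges n)))) \<noteq> {}"
  have "card (prb (probes (explore n u) \<omega> (Suc (card (edges n))))) \<le> card (edges n)"
  proof (rule card_mono[OF finite_edges])
    show "prb (probes (explore n u) \<omega> (Suc (card (edges n)))) \<subseteq> edges n"
      unfolding prb_def by (rule explore_edges[OF cn])
  qed
  then show False using card_prb_run[OF cn a] by simp
qed

lemma bad_bound:
  assumes un: "u < n" and n2: "2 \<le> n" and p: "0 \<le> p" "p \<le> 1" and th: "0 \<le> \<theta>" and lm0: "0 \<le> lm"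
    and lam: "exp lm * (1 - p + p * exp (- \<theta>)) = 1"
    and H: "\<And>r::nat. 1 \<le> r \<Longrightarrow> real r < m \<Longrightarrow> \<theta> \<le> lm * (real n - real r)"
  shows "(\<Sum>\<omega>\<in>Om (edges n). wt p (edges n) \<omega> *
           indicator {\<omega>. real (card {w. w < n \<and> conn (open_edges n \<omega>) u w}) < m} \<omega>) \<le> exp (- \<theta>)"
proof -
  define E where "E = edges n"
  have fin: "finite E" by (simp add: E_def finite_edges)
  have cn: "cross n u [] \<noteq> {}" by (rule cross_nil[OF un n2])
  define T where "T = Suc (card (edges n))"
  define h where "h \<omega> = probes (explore n u) \<omega> T" for \<omega>
  have inE: "\<And>\<omega> t. \<omega> \<in> Om E \<Longrightarrow> explore n u (probes (explore n u) \<omega> t) \<in> E"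
    using explore_inE[OF cn] by (simp add: E_def)
  have M: "(\<Sum>\<omega>\<in>Om E. wt p E \<omega> * Phi n u \<theta> lm (h \<omega>)) \<le> Phi n u \<theta> lm []"
    unfolding h_def
    apply (rule mart_le[OF fin p])
     apply (erule inE)
    apply (rule hat_Phi[OF cn p th lam])
    done
  have P0: "Phi n u \<theta> lm [] = exp (- \<theta>)" by (simp add: Phi_def Rr_nil[OF un] prb_def)
  have pw: "indicator {\<omega>. real (card {w. w < n \<and> conn (open_edges n \<omega>) u w}) < m} \<omega> \<le> Phi n u \<theta> lm (h \<omega>)"
    if om: "\<omega> \<in> Om E" for \<omega>
  proof (cases "real (card {w. w < n \<and> conn (open_edges n \<omega>) u w}) < m")
    case False then show ?thesis by (simp add: Phi_def)
  next
    case True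
    define C where "C = {w. w < n \<and> conn (open_edges n \<omega>) u w}"
    define r where "r = card (Rr n u (h \<omega>))"
    define F where "F = card (prb (h \<omega>))"
    have Aop: "Aof (h \<omega>) \<subseteq> open_edges n \<omega>"
    proof
      fix e assume "e \<in> Aof (h \<omega>)"
      then have et: "(e, True) \<in> set (h \<omega>)" by (simp add: Aof_def)
      then have "\<omega> e" using probes_consistent unfolding h_def by metis
      moreover have "e \<in> edges n" using et explore_edges[OF cn, of \<omega> T] unfolding h_def by force
      ultimately show "e \<in> open_edges n \<omega>" by (simp add: open_edges_def)
    qed
    have "Rr n u (h \<omega>) \<subseteq> C" using conn_mono[OF Aop] by (auto simp: Rr_def C_def)
    moreover have "finite C" by (rule finite_subset[of _ "{..<n}"]) (auto simp: C_def)
    ultimately have rC: "r \<le> card C" by (simp add: r_def card_mono)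
    have r1: "1 \<le> r"
    proof -
      have "u \<in> Rr n u (h \<omega>)" using un by (simp add: Rr_def conn_refl)
      then show ?thesis using finite_Rr by (simp add: r_def Suc_le_eq card_gt_0_iff) blast
    qed
    have rm: "real r < m"
    proof -
      have "real r \<le> real (card C)" using rC by simp
      then show ?thesis using True unfolding C_def by linarith
    qed
    have rn: "r \<le> n" using card_mono[OF _ Rr_sub, of n u "h \<omega>"] by (simp add: r_def)
    have ce: "cross n u (h \<omega>) = {}" unfolding h_def T_def by (rule explore_term[OF cn])
    have Fr: "real r * (real n - real r) \<le> real F"
    proof -
      have "r * (n - r) \<le> F" using cross_empty_card[OF ce] by (simp add: r_def F_def)
      then have "real (r * (n - r)) \<le> real F" by linarith
      then show ?thesis using rn by (simp add: of_nat_diff)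
    qed
    have "0 \<le> real r * (lm * (real n - real r) - \<theta>)"
      using H[OF r1 rm] by simp
    also have "\<dots> \<le> - \<theta> * real r + lm * real F"
    proof -
      have "lm * (real r * (real n - real r)) \<le> lm * real F" using mult_left_mono[OF Fr lm0] .
      then show ?thesis by (simp add: algebra_simps)
    qed
    finally have "1 \<le> Phi n u \<theta> lm (h \<omega>)" by (simp add: Phi_def r_def F_def)
    then show ?thesis using True by simp
  qed
  have "(\<Sum>\<omega>\<in>Om E. wt p E \<omega> * indicator {\<omega>. real (card {w. w < n \<and> conn (open_edges n \<omega>) u w}) < m} \<omega>)
      \<le> (\<Sum>\<omega>\<in>Om E. wt p E \<omega> * Phi n u \<theta> lm (h \<omega>))"
    using pw by (intro sum_mono mult_left_mono wt_nonneg p) auto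
  also have "\<dots> \<le> exp (- \<theta>)" using M P0 by simp
  finally show ?thesis by (simp add: E_def)
qed



lemma conn_map: "conn F a b \<Longrightarrow> conn ((\<lambda>e. f ` e) ` F) (f a) (f b)"
  unfolding conn_def
proof (induction rule: rtrancl_induct)
  case base then show ?case by simp
next
  case (step y z)
  have "{y, z} \<in> F" using step(2) by simp
  then have "{f y, f z} \<in> (\<lambda>e. f ` e) ` F" by (auto intro: rev_image_eqI[of "{y, z}"])
  then have "(f y, f z) \<in> {(a, b). {a, b} \<in> (\<lambda>e. f ` e) ` F}" by simp
  then show ?case using step(3) by (meson rtrancl_into_rtrancl)
qed

definition swp :: "nat \<Rightarrow> nat \<Rightarrow> nat \<Rightarrow> nat" where
  "swp v w a = (if a = v then w else if a = w then v else a)"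

lemma swp_swp[simp]: "swp v w (swp v w a) = a" by (simp add: swp_def)
lemma swp_img_img[simp]: "swp v w ` (swp v w ` e) = e" by (force simp: image_image)
lemma inj_swp: "inj (swp v w)" by (metis injI swp_swp)

lemma swp_edges: assumes "v < n" "w < n" "e \<in> edges n" shows "swp v w ` e \<in> edges n"
proof -
  have "swp v w ` e \<subseteq> {..<n}" using assms by (auto simp: edges_def swp_def)
  moreover have "card (swp v w ` e) = card e" by (rule card_image) (rule inj_on_subset[OF inj_swp], simp)
  ultimately show ?thesis using assms by (simp add: edges_def)
qed

lemma sym_conn:
  assumes n: "u < n" "v < n" "w < n" "u \<noteq> v" "u \<noteq> w" and p: "0 \<le> p" "p \<le> 1"
  shows "(\<Sum>\<omega>\<in>Om (edges n). wt p (edges n) \<omega> * indicator {\<omega>. conn (open_edges n \<omega>) u v} \<omega>)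
       = (\<Sum>\<omega>\<in>Om (edges n). wt p (edges n) \<omega> * indicator {\<omega>. conn (open_edges n \<omega>) u w} \<omega>)"
proof -
  define E where "E = edges n"
  define im where "im e = swp v w ` e" for e
  define T where "T \<omega> = (\<lambda>e. \<omega> (im e))" for \<omega> :: "nat set \<Rightarrow> bool"
  have imim: "im (im e) = e" for e by (simp add: im_def)
  have imE: "e \<in> E \<Longrightarrow> im e \<in> E" for e using swp_edges[OF n(2,3)] by (simp add: E_def im_def)
  have imE': "im e \<in> E \<longleftrightarrow> e \<in> E" for e using imE imim by metis
  have TT: "T (T \<omega>) = \<omega>" for \<omega> by (simp add: T_def imim)
  have TOm: "\<omega> \<in> Om E \<Longrightarrow> T \<omega> \<in> Om E" for \<omega> by (auto simp: Om_def T_def imE')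
  have bijT: "bij_betw T (Om E) (Om E)" by (rule bij_betwI[where g = T]) (auto simp: TOm TT)
  have bijim: "bij_betw im E E" by (rule bij_betwI[where g = im]) (auto simp: imE imim)
  have wtT: "wt p E (T \<omega>) = wt p E \<omega>" for \<omega>
    unfolding wt_def T_def using prod.reindex_bij_betw[OF bijim, of "\<lambda>e. if \<omega> e then p else 1 - p"] by simp
  have opT: "open_edges n (T \<omega>) = (\<lambda>e. swp v w ` e) ` open_edges n \<omega>" for \<omega>
  proof -
    have "e \<in> open_edges n (T \<omega>) \<longleftrightarrow> im e \<in> open_edges n \<omega>" for e
      by (simp add: open_edges_def T_def imE'[folded E_def, unfolded E_def] E_def)
    moreover have inv: "e \<in> im ` S \<longleftrightarrow> im e \<in> S" for e S
    proof
      assume "e \<in> im ` S"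
      then obtain s where "s \<in> S" "e = im s" by blast
      then show "im e \<in> S" by (simp add: imim)
    next
      assume "im e \<in> S"
      then have "im (im e) \<in> im ` S" by blast
      then show "e \<in> im ` S" by (simp add: imim)
    qed
    ultimately have "open_edges n (T \<omega>) = im ` open_edges n \<omega>" by blast
    then show ?thesis by (simp add: im_def)
  qed
  have su: "swp v w u = u" using n by (simp add: swp_def)
  have sw: "swp v w w = v" by (simp add: swp_def)
  have sv: "swp v w v = w" by (simp add: swp_def)
  have ind: "conn (open_edges n (T \<omega>)) u v \<longleftrightarrow> conn (open_edges n \<omega>) u w" for \<omega>
  proof
    assume "conn (open_edges n \<omega>) u w"
    from conn_map[OF this, of "swp v w"] show "conn (open_edges n (T \<omega>)) u v" by (simp add: opT su sw)
  next
    assume "conn (open_edges n (T \<omega>)) u v"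
    from conn_map[OF this, of "swp v w"] show "conn (open_edges n \<omega>) u w"
      by (simp add: opT su sv image_image)
  qed
  have "(\<Sum>\<omega>\<in>Om E. wt p E \<omega> * indicator {\<omega>. conn (open_edges n \<omega>) u v} \<omega>)
      = (\<Sum>\<omega>\<in>Om E. wt p E (T \<omega>) * indicator {\<omega>. conn (open_edges n \<omega>) u v} (T \<omega>))"
    using sum.reindex_bij_betw[OF bijT, of "\<lambda>\<omega>. wt p E \<omega> * indicator {\<omega>. conn (open_edges n \<omega>) u v} \<omega>"]
    by simp
  also have "\<dots> = (\<Sum>\<omega>\<in>Om E. wt p E \<omega> * indicator {\<omega>. conn (open_edges n \<omega>) u w} \<omega>)"
    by (intro sum.cong refl) (simp add: wtT ind indicator_def)
  finally show ?thesis by (simp add: E_def)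
qed



lemma PA_bound:
  assumes n: "u < n" "v < n" "u \<noteq> v" and p: "0 \<le> p" "p \<le> 1" and m: "1 \<le> m"
    and B: "(\<Sum>\<omega>\<in>Om (edges n). wt p (edges n) \<omega> *
           indicator {\<omega>. real (card {w. w < n \<and> conn (open_edges n \<omega>) u w}) < m} \<omega>) \<le> b"
  shows "(m - 1) * (1 - b) \<le> (real n - 1) *
           (\<Sum>\<omega>\<in>Om (edges n). wt p (edges n) \<omega> * indicator {\<omega>. conn (open_edges n \<omega>) u v} \<omega>)"
proof -
  define E where "E = edges n"
  have fin: "finite E" by (simp add: E_def finite_edges)
  define W where "W = {..<n} - {u}"
  define PA where "PA w = (\<Sum>\<omega>\<in>Om E. wt p E \<omega> * indicator {\<omega>. conn (open_edges n \<omega>) u w} \<omega>)" for w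
  define C where "C \<omega> = {w. w < n \<and> conn (open_edges n \<omega>) u w}" for \<omega>
  have cW: "card W = n - 1" using n by (simp add: W_def)
  have "(\<Sum>w\<in>W. PA w) = (\<Sum>w\<in>W. PA v)"
    by (intro sum.cong refl) (use n p in \<open>auto simp: PA_def W_def E_def intro: sym_conn\<close>)
  also have "\<dots> = (real n - 1) * PA v" using cW n by (simp add: of_nat_diff)
  finally have s1: "(\<Sum>w\<in>W. PA w) = (real n - 1) * PA v" .
  have "(\<Sum>w\<in>W. PA w) = (\<Sum>\<omega>\<in>Om E. wt p E \<omega> * (\<Sum>w\<in>W. indicator {\<omega>. conn (open_edges n \<omega>) u w} \<omega>))"
    unfolding PA_def by (simp add: sum_distrib_left sum.swap[of _ W])
  also have "\<dots> = (\<Sum>\<omega>\<in>Om E. wt p E \<omega> * real (card (C \<omega> - {u})))"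
  proof (intro sum.cong refl arg_cong2[where f = "(*)"])
    fix \<omega>
    have "(\<Sum>w\<in>W. indicator {\<omega>. conn (open_edges n \<omega>) u w} \<omega>) = (\<Sum>w\<in>W. if conn (open_edges n \<omega>) u w then 1 else (0::real))"
      by (intro sum.cong) (auto simp: indicator_def)
    also have "\<dots> = (\<Sum>w\<in>{w\<in>W. conn (open_edges n \<omega>) u w}. 1)"
      by (rule sum.inter_filter[symmetric]) (simp add: W_def)
    also have "{w\<in>W. conn (open_edges n \<omega>) u w} = C \<omega> - {u}" by (auto simp: W_def C_def)
    finally show "(\<Sum>w\<in>W. indicator {\<omega>. conn (open_edges n \<omega>) u w} \<omega>) = real (card (C \<omega> - {u}))" by simp
  qed
  finally have s2: "(\<Sum>w\<in>W. PA w) = (\<Sum>\<omega>\<in>Om E. wt p E \<omega> * real (card (C \<omega> - {u})))" .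
  have pw: "(m - 1) * (1 - indicator {\<omega>. real (card (C \<omega>)) < m} \<omega>) \<le> real (card (C \<omega> - {u}))" for \<omega>
  proof (cases "real (card (C \<omega>)) < m")
    case True then show ?thesis by simp
  next
    case False
    have "u \<in> C \<omega>" using n by (simp add: C_def conn_refl)
    moreover have "finite (C \<omega>)" by (rule finite_subset[of _ "{..<n}"]) (auto simp: C_def)
    ultimately have "C \<omega> \<noteq> {}" "finite (C \<omega>)" "u \<in> C \<omega>" by auto
    then have pos: "1 \<le> card (C \<omega>)" and cd: "card (C \<omega> - {u}) = card (C \<omega>) - 1"
      by (simp_all add: Suc_le_eq card_gt_0_iff card_Diff_singleton)
    then have "real (card (C \<omega> - {u})) = real (card (C \<omega>)) - 1" by (simp add: of_nat_diff)
    then show ?thesis using False by simp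
  qed
  have sw: "sum (wt p E) (Om E) = 1" by (rule wt_sum1[OF fin p])
  have "(m - 1) * (1 - b) \<le> (m - 1) * (1 - (\<Sum>\<omega>\<in>Om E. wt p E \<omega> * indicator {\<omega>. real (card (C \<omega>)) < m} \<omega>))"
    using B m by (intro mult_left_mono) (auto simp: C_def E_def)
  also have "\<dots> = (\<Sum>\<omega>\<in>Om E. wt p E \<omega> * ((m - 1) * (1 - indicator {\<omega>. real (card (C \<omega>)) < m} \<omega>)))"
  proof -
    define I :: "(nat set \<Rightarrow> bool) \<Rightarrow> real" where "I \<omega> = indicator {\<omega>. real (card (C \<omega>)) < m} \<omega>" for \<omega>
    have "(\<Sum>\<omega>\<in>Om E. wt p E \<omega> * ((m - 1) * (1 - I \<omega>)))
        = (\<Sum>\<omega>\<in>Om E. (m - 1) * wt p E \<omega> - (m - 1) * (wt p E \<omega> * I \<omega>))"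
      by (intro sum.cong refl) (simp add: algebra_simps)
    also have "\<dots> = (m - 1) * sum (wt p E) (Om E) - (m - 1) * (\<Sum>\<omega>\<in>Om E. wt p E \<omega> * I \<omega>)"
      by (simp add: sum_subtractf sum_distrib_left)
    finally show ?thesis using sw by (simp add: I_def right_diff_distrib)
  qed
  also have "\<dots> \<le> (\<Sum>\<omega>\<in>Om E. wt p E \<omega> * real (card (C \<omega> - {u})))"
    using pw p by (intro sum_mono mult_left_mono wt_nonneg) auto
  finally show ?thesis using s1 s2 by (simp add: PA_def E_def)
qed

lemma lm_facts:
  fixes c n :: real
  assumes c: "c > 1" and nc: "c \<le> n"
  defines "p \<equiv> c / n" and "\<theta> \<equiv> (c - 1) / 2" and "q \<equiv> 1 - c / n + c / n * exp (- ((c - 1) / 2))"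
  shows "0 < q" "exp (- ln q) * q = 1" "0 \<le> - ln q"
    and "\<And>r. r < (c - 1) / (2 * c) * n \<Longrightarrow> \<theta> \<le> (- ln q) * (n - r)"
proof -
  have n0: "0 < n" using c nc by linarith
  have p01: "0 < p" "p \<le> 1" using c nc n0 by (auto simp: p_def)
  have th: "0 < \<theta>" using c by (simp add: \<theta>_def)
  have e1: "exp (- \<theta>) < 1" using th by simp
  have e0: "0 < exp (- \<theta>)" by simp
  have qd: "q = 1 - p * (1 - exp (- \<theta>))" by (simp add: q_def p_def \<theta>_def algebra_simps)
  show q0: "0 < q"
  proof -
    have "p * (1 - exp (- \<theta>)) < 1 * 1" using p01 e1 e0
      by (intro mult_le_less_imp_less) auto
    then show ?thesis by (simp add: qd)
  qed
  show "exp (- ln q) * q = 1" using q0 by (simp add: exp_minus field_simps)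
  have lnq: "ln q \<le> q - 1" by (rule ln_le_minus_one[OF q0])
  have lmq: "p * (1 - exp (- \<theta>)) \<le> - ln q" using lnq by (simp add: qd)
  then show "0 \<le> - ln q" using p01 e1 by (smt (verit) mult_nonneg_nonneg)
  have eb: "\<theta> / (1 + \<theta>) \<le> 1 - exp (- \<theta>)"
  proof -
    have "1 + \<theta> \<le> exp \<theta>" by simp
    then have "exp (- \<theta>) \<le> 1 / (1 + \<theta>)" using th by (simp add: exp_minus field_simps)
    moreover have "1 - 1 / (1 + \<theta>) = \<theta> / (1 + \<theta>)" using th by (simp add: field_simps)
    ultimately show ?thesis by linarith
  qed
  fix r assume r: "r < (c - 1) / (2 * c) * n"
  have nr: "n * (1 + \<theta>) / c \<le> n - r"
  proof -
    have "n * (1 + \<theta>) / c = n - (c - 1) / (2 * c) * n" using c by (simp add: \<theta>_def field_simps)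
    then show ?thesis using r by linarith
  qed
  have pos1: "0 \<le> n * (1 + \<theta>) / c" using th n0 c by simp
  have pn: "p * (n / c) = 1" using n0 c by (simp add: p_def)
  have tt: "(\<theta> / (1 + \<theta>)) * (1 + \<theta>) = \<theta>" using th by simp
  have "p * (\<theta> / (1 + \<theta>)) * (n * (1 + \<theta>) / c) = (p * (n / c)) * ((\<theta> / (1 + \<theta>)) * (1 + \<theta>))"
    by (simp only: divide_inverse mult_ac)
  then have "p * (\<theta> / (1 + \<theta>)) * (n * (1 + \<theta>) / c) = \<theta>" unfolding pn tt by (rule trans) simp
  then have "\<theta> = p * (\<theta> / (1 + \<theta>)) * (n * (1 + \<theta>) / c)" by simp
  also have "\<dots> \<le> (- ln q) * (n - r)"
  proof (rule mult_mono)
    show "p * (\<theta> / (1 + \<theta>)) \<le> - ln q" using lmq eb p01 by (meson mult_left_mono less_imp_le order_trans)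
    show "n * (1 + \<theta>) / c \<le> n - r" by (rule nr)
    show "0 \<le> - ln q" using lmq p01 e1 by (smt (verit) mult_nonneg_nonneg)
    show "0 \<le> n * (1 + \<theta>) / c" by (rule pos1)
  qed
  finally show "\<theta> \<le> (- ln q) * (n - r)" .
qed



lemma rt_ge:
  assumes lr: "local_router n u v alg" and uv: "u \<noteq> v"
    and A: "conn (open_edges n \<omega>) u v" and J: "\<not> openv v (probes alg \<omega> K)"
  shows "K \<le> route_time alg u v \<omega>"
proof (rule ccontr)
  assume "\<not> K \<le> route_time alg u v \<omega>"
  then have lt: "route_time alg u v \<omega> < K" by simp
  obtain k where "conn (found_open (probes alg \<omega> k)) u v" using lr A unfolding local_router_def by blast
  then have c: "conn (found_open (probes alg \<omega> (route_time alg u v \<omega>))) u v"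
    unfolding route_time_def by (rule LeastI)
  have "found_open (probes alg \<omega> (route_time alg u v \<omega>)) \<subseteq> found_open (probes alg \<omega> K)"
  proof -
    have "probes alg \<omega> (route_time alg u v \<omega>) = take (route_time alg u v \<omega>) (probes alg \<omega> K)"
      using lt by (simp add: probes_take)
    then show ?thesis unfolding found_open_def using set_take_subset by fastforce
  qed
  from conn_mono[OF this c] have "conn (found_open (probes alg \<omega> K)) u v" .
  from conn_cases[OF this] uv have "openv v (probes alg \<omega> K)"
    by (auto simp: openv_def found_open_def)
  then show False using J by simp
qed

lemma pointwise:
  assumes lr: "local_router n u v alg" and uv: "u \<noteq> v"
  shows "real K * (indicator {\<omega>. conn (open_edges n \<omega>) u v} \<omega> - indicator {\<omega>. openv v (probes alg \<omega> K)} \<omega>)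
         \<le> real (route_time alg u v \<omega>) * indicator {\<omega>. conn (open_edges n \<omega>) u v} \<omega>"
proof (cases "conn (open_edges n \<omega>) u v")
  case True
  show ?thesis
  proof (cases "openv v (probes alg \<omega> K)")
    case False
    then show ?thesis using rt_ge[OF lr uv True False] True by simp
  qed (use True in simp)
qed simp

theorem mainTheorem8:
  fixes c :: real
  assumes "c > 1"
  shows "\<exists>C > 0. \<exists>N. \<forall>n \<ge> N. \<forall>u v alg.
           u < n \<and> v < n \<and> u \<noteq> v \<and> local_router n u v alg \<longrightarrow>
           exp_routing_complexity n (c / real n) u v alg \<ge> C * real n ^ 2"
proof -
  have c1: "1 < c" by fact
  define \<theta> where "\<theta> = (c - 1) / 2"
  define d' where "d' = (c - 1) / (2 * c)"
  define k0 where "k0 = d' * (1 - exp (- \<theta>)) / 2"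
  define d where "d = k0 / (8 * c\<^sup>2)"
  define N0 where "N0 = Max {c, 2, 2 / d', 4 * c / k0, 2 / d}"
  have th0: "0 < \<theta>" using c1 by (simp add: \<theta>_def)
  have d'0: "0 < d'" using c1 by (simp add: d'_def)
  have k00: "0 < k0" using d'0 th0 by (simp add: k0_def)
  have d0: "0 < d" using k00 c1 by (simp add: d_def)
  have N0ge: "c \<le> N0" "2 \<le> N0" "2 / d' \<le> N0" "4 * c / k0 \<le> N0" "2 / d \<le> N0"
    unfolding N0_def by (auto intro: Max_ge)
  show ?thesis
  proof (intro exI[of _ "d / 4"] conjI exI[of _ "nat \<lceil>N0\<rceil>"] allI impI)
    show "0 < d / 4" using d0 by simp
    fix n u v alg
    assume nN: "nat \<lceil>N0\<rceil> \<le> n" and H: "u < n \<and> v < n \<and> u \<noteq> v \<and> local_router n u v alg"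
    then have un: "u < n" and vn: "v < n" and uv: "u \<noteq> v" and lr: "local_router n u v alg" by auto
    define rn where "rn = real n"
    have rnN: "N0 \<le> rn" using nN unfolding rn_def by linarith
    have n2: "2 \<le> n" using rnN N0ge(2) unfolding rn_def by linarith
    have rn0: "0 < rn" using n2 by (simp add: rn_def)
    define p where "p = c / rn"
    have p01: "0 \<le> p" "p \<le> 1" using c1 rnN N0ge(1) rn0 by (auto simp: p_def)
    define E where "E = edges n"
    have fin: "finite E" by (simp add: E_def finite_edges)
    define q where "q = 1 - c / rn + c / rn * exp (- ((c - 1) / 2))"
    define lm where "lm = - ln q"
    have cn: "c \<le> rn" using rnN N0ge(1) by linarith
    note LF = lm_facts[OF c1 cn, folded q_def, folded lm_def \<theta>_def]
    have lam: "exp lm * (1 - p + p * exp (- \<theta>)) = 1" using LF(2) by (simp add: q_def p_def \<theta>_def lm_def)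
    have BB: "(\<Sum>\<omega>\<in>Om (edges n). wt p (edges n) \<omega> *
           indicator {\<omega>. real (card {w. w < n \<and> conn (open_edges n \<omega>) u w}) < d' * rn} \<omega>) \<le> exp (- \<theta>)"
    proof (rule bad_bound[OF un n2 p01 less_imp_le[OF th0] LF(3) lam])
      fix r :: nat assume "1 \<le> r" "real r < d' * rn"
      then show "\<theta> \<le> lm * (real n - real r)" using LF(4)[of "real r"] by (simp add: d'_def rn_def)
    qed
    define PA where "PA = (\<Sum>\<omega>\<in>Om E. wt p E \<omega> * indicator {\<omega>. conn (open_edges n \<omega>) u v} \<omega>)"
    have d'n2: "2 \<le> d' * rn"
    proof -
      have "2 / d' \<le> rn" using rnN N0ge(3) by linarith
      then show ?thesis using d'0 by (simp add: field_simps)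
    qed
    then have d'n: "1 \<le> d' * rn" by simp
    have PAb: "(d' * rn - 1) * (1 - exp (- \<theta>)) \<le> (rn - 1) * PA"
      using PA_bound[OF un vn uv p01 d'n BB] by (simp add: PA_def E_def rn_def)
    have PAk: "k0 \<le> PA"
    proof -
      have "d' * rn / 2 \<le> d' * rn - 1" using d'n2 by simp
      then have "(d' * rn / 2) * (1 - exp (- \<theta>)) \<le> (d' * rn - 1) * (1 - exp (- \<theta>))"
        using th0 by (intro mult_right_mono) auto
      then have "k0 * rn \<le> (rn - 1) * PA" using PAb by (simp add: k0_def algebra_simps)
      moreover have "0 \<le> PA" unfolding PA_def using p01 by (intro sum_nonneg mult_nonneg_nonneg wt_nonneg) auto
      moreover have "(rn - 1) * PA \<le> rn * PA" using \<open>0 \<le> PA\<close> by (simp add: left_diff_distrib)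
      ultimately have "rn * k0 \<le> rn * PA" by (simp add: mult.commute)
      then show ?thesis using rn0 by (rule mult_left_le_imp_le)
    qed
    define K where "K = nat \<lfloor>d * rn\<^sup>2\<rfloor>"
    have K1: "real K \<le> d * rn\<^sup>2" using d0 by (simp add: K_def)
    have K2: "d * rn\<^sup>2 - 1 \<le> real K" using d0 by (simp add: K_def)
    define PJ where "PJ = (\<Sum>\<omega>\<in>Om E. wt p E \<omega> * indicator {\<omega>. openv v (probes alg \<omega> K)} \<omega>)"
    have PJb: "PJ \<le> p * (1 + 2 * p * K)" using route_bound[OF lr uv p01, of K] by (simp add: PJ_def E_def)
    have PJk: "PJ \<le> k0 / 2"
    proof -
      have "p * (1 + 2 * p * K) = p + 2 * p\<^sup>2 * K" by (simp add: algebra_simps power2_eq_square)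
      also have "\<dots> \<le> p + 2 * p\<^sup>2 * (d * rn\<^sup>2)" using K1 p01 by (intro add_left_mono mult_left_mono) auto
      also have "2 * p\<^sup>2 * (d * rn\<^sup>2) = k0 / 4"
      proof -
        have "p * rn = c" using rn0 by (simp add: p_def)
        then have "p\<^sup>2 * rn\<^sup>2 = c\<^sup>2" by (simp add: power_mult_distrib[symmetric])
        moreover have "2 * p\<^sup>2 * (d * rn\<^sup>2) = 2 * d * (p\<^sup>2 * rn\<^sup>2)" by (simp only: mult_ac)
        moreover have "2 * d * c\<^sup>2 = k0 / 4" using c1 by (simp add: d_def)
        ultimately show ?thesis by simp
      qed
      also have "p \<le> k0 / 4"
      proof -
        have "4 * c / k0 \<le> rn" using rnN N0ge(4) by linarith
        then have "4 * c \<le> rn * k0" using k00 by (simp add: pos_divide_le_eq)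
        then have "c \<le> k0 / 4 * rn" by (simp add: mult.commute)
        then show ?thesis using rn0 by (simp add: p_def pos_divide_le_eq)
      qed
      finally show ?thesis using PJb by simp
    qed
    define Num where "Num = (\<Sum>\<omega>\<in>Om E. wt p E \<omega> * (real (route_time alg u v \<omega>) * indicator {\<omega>. conn (open_edges n \<omega>) u v} \<omega>))"
    have erc: "exp_routing_complexity n (c / real n) u v alg = Num / PA"
    proof -
      have g: "gnp n (c / real n) = Pi_pmf E False (\<lambda>_. bernoulli_pmf p)" by (simp add: gnp_def E_def p_def rn_def)
      show ?thesis unfolding exp_routing_complexity_def g expect_sum[OF fin p01] prob_sum[OF fin p01] Num_def PA_def
        by (rule refl)
    qed
    have NumK: "real K * (PA - PJ) \<le> Num"
    proof -
      have "real K * (PA - PJ) = (\<Sum>\<omega>\<in>Om E. wt p E \<omega> * (real K * (indicator {\<omega>. conn (open_edges n \<omega>) u v} \<omega> - indicator {\<omega>. openv v (probes alg \<omega> K)} \<omega>)))"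
      proof -
        have "(\<Sum>\<omega>\<in>Om E. wt p E \<omega> * (real K * (indicator {\<omega>. conn (open_edges n \<omega>) u v} \<omega> - indicator {\<omega>. openv v (probes alg \<omega> K)} \<omega>)))
          = (\<Sum>\<omega>\<in>Om E. real K * (wt p E \<omega> * indicator {\<omega>. conn (open_edges n \<omega>) u v} \<omega>) - real K * (wt p E \<omega> * indicator {\<omega>. openv v (probes alg \<omega> K)} \<omega>))"
          by (intro sum.cong refl) (simp add: algebra_simps)
        also have "\<dots> = real K * PA - real K * PJ"
          by (simp add: sum_subtractf sum_distrib_left PA_def PJ_def)
        finally show ?thesis by (simp add: right_diff_distrib)
      qed
      also have "\<dots> \<le> Num" unfolding Num_def
        using pointwise[OF lr uv] p01 by (intro sum_mono mult_left_mono wt_nonneg) auto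
      finally show ?thesis .
    qed
    have "d / 4 * rn\<^sup>2 \<le> real K / 2"
    proof -
      have "2 / d \<le> rn" using rnN N0ge(5) by linarith
      then have "2 \<le> d * rn" using d0 by (simp add: field_simps)
      moreover have "d * rn \<le> d * rn\<^sup>2" using d0 rn0 n2 by (simp add: power2_eq_square rn_def)
      ultimately show ?thesis using K2 by linarith
    qed
    also have "real K / 2 \<le> Num / PA"
    proof -
      have "real K * (PA / 2) \<le> real K * (PA - PJ)" using PJk PAk by (intro mult_left_mono) auto
      then have "real K * (PA / 2) \<le> Num" using NumK by (rule order_trans)
      moreover have "real K / 2 * PA = real K * (PA / 2)" by simp
      ultimately have "real K / 2 * PA \<le> Num" by linarith
      moreover have "0 < PA" using PAk k00 by simp
      ultimately show ?thesis by (simp add: pos_le_divide_eq)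
    qed
    finally show "d / 4 * real n ^ 2 \<le> exp_routing_complexity n (c / real n) u v alg"
      using erc by (simp add: rn_def)
  qed
qed


end
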